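(* Let $d_h,d_b\ge1$ and $d=2d_h+d_b+2$. There exists a single-layer Transformer encoder (with linear maps $Q,K,V:\mathbb{Q}^d\to\mathbb{Q}^d$, an FFN $O$, residual connections, and final linear maps $K^{(1)},V^{(1)}$) such that for every $n\ge1$ and every $s_1,\dots,s_n\in\mathbb{Q}^{d_b}$, on input the sequence $x_i=[0_{d_h},s_i,0_{d_h},i,1]$, $i=1,\dots,n$, it outputs $(K^e,V^e)$ with $K^e=(k_1,\dots,k_n)$, $V^e=(v_1,\dots,v_n)$, where $k_i=[0_{d_h},0_{d_b},0_{d_h},-1,i]$ and $v_i=[0_{d_h},s_i,0_{d_h},0,0]$.
   Context: Vectors in $\mathbb{Q}^d$ are written as concatenations of blocks, $[\cdot,\cdot,\dots]$; $0_k$ is the zero vector of length $k$. A single-layer encoder with parameters $Q,K,V,O$ maps $(x_1,\dots,x_n)$ to $z_i=O(a_i)+a_i$ where $a_i=\mathrm{Att}(Q(x_i),K(X),V(X))+x_i$, and $\mathrm{Att}(q,K,V)=\sum_i\alpha_iv_i$ with $(\alpha_i)=\mathrm{hardmax}(f^{att}(q,k_1),\dots,f^{att}(q,k_n))$ ($\mathrm{hardmax}$ puts equal weight $1/r$ on the $r$ maximizing coordinates, $0$ elsewhere) for a scoring function $f^{att}$ (e.g. $-|\langle q,k\rangle|$). The FFN $O$ uses the saturated linear activation $\sigma(x)=\min(1,\max(0,x))$. The encoder outputs $K^e=K^{(1)}(Z)$, $V^e=V^{(1)}(Z)$ applied coordinatewise to $Z=(z_1,\dots,z_n)$. *)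

theory Defs
  imports "Jordan_Normal_Form.Matrix"
begin

definition sat :: "rat \<Rightarrow> rat" where
  "sat x = min 1 (max 0 x)"

definition score :: "rat vec \<Rightarrow> rat vec \<Rightarrow> rat" where
  "score q k = - \<bar>q \<bullet> k\<bar>"

definition hardmax :: "rat list \<Rightarrow> rat list" where
  "hardmax xs = (let m = Max (set xs); r = length (filter (\<lambda>x. x = m) xs)
                 in map (\<lambda>x. if x = m then 1 / of_nat r else 0) xs)"

definition att :: "nat \<Rightarrow> rat vec \<Rightarrow> rat vec list \<Rightarrow> rat vec list \<Rightarrow> rat vec" where
  "att d q ks vs = (let \<alpha> = hardmax (map (score q) ks)
                    in vec d (\<lambda>j. \<Sum>i<length vs. (\<alpha> ! i) * (vs ! i $ j)))"

definition ffn :: "rat mat \<Rightarrow> rat vec \<Rightarrow> rat mat \<Rightarrow> rat vec \<Rightarrow> rat vec \<Rightarrow> rat vec" where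
  "ffn W1 b1 W2 b2 x = W2 *\<^sub>v map_vec sat (W1 *\<^sub>v x + b1) + b2"

definition enc_layer :: "nat \<Rightarrow> rat mat \<Rightarrow> rat mat \<Rightarrow> rat mat \<Rightarrow> (rat vec \<Rightarrow> rat vec)
    \<Rightarrow> rat vec list \<Rightarrow> rat vec list" where
  "enc_layer d Q K V F xs =
     map (\<lambda>x. let a = att d (Q *\<^sub>v x) (map (\<lambda>y. K *\<^sub>v y) xs) (map (\<lambda>y. V *\<^sub>v y) xs) + x
              in F a + a) xs"

definition zvec :: "nat \<Rightarrow> rat vec" where
  "zvec k = 0\<^sub>v k"

definition inp :: "nat \<Rightarrow> rat vec \<Rightarrow> nat \<Rightarrow> rat vec" where
  "inp dh s i = zvec dh @\<^sub>v s @\<^sub>v zvec dh @\<^sub>v vec_of_list [of_nat i, 1]"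

definition key_out :: "nat \<Rightarrow> nat \<Rightarrow> nat \<Rightarrow> rat vec" where
  "key_out dh db i = zvec dh @\<^sub>v zvec db @\<^sub>v zvec dh @\<^sub>v vec_of_list [-1, of_nat i]"

definition val_out :: "nat \<Rightarrow> rat vec \<Rightarrow> rat vec" where
  "val_out dh s = zvec dh @\<^sub>v s @\<^sub>v zvec dh @\<^sub>v vec_of_list [0, 0]"

end

theory Submission
  imports Defs
begin
lemma inp_dim: "s \<in> carrier_vec db \<Longrightarrow> inp dh s i \<in> carrier_vec (2*dh+db+2)"
  unfolding inp_def zvec_def by (auto simp del: vec_of_list_Cons intro!: carrier_vecI)lemma inp_idx: "s \<in> carrier_vec db \<Longrightarrow> j < 2*dh+db+2 \<Longrightarrow> inp dh s i $ j =
  (if j < dh then 0 else if j < dh+db then s$(j-dh) else if j < 2*dh+db then 0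
   else if j = 2*dh+db then of_nat i else 1)"
proof -
  assume s: "s \<in> carrier_vec db" and j: "j < 2*dh+db+2"
  have "inp dh s i $ j = (if j < dh then 0 else if j < dh+db then s$(j-dh) else if j < 2*dh+db then 0
   else [of_nat i, 1] ! (j - (2*dh+db)))"
    using s j unfolding inp_def zvec_def
    by (auto simp del: vec_of_list_Cons simp: vec_of_list_index
      intro!: arg_cong[where f="\<lambda>k. [rat_of_nat i, 1] ! k"])
  moreover have "\<not> j < 2*dh+db \<Longrightarrow> j \<noteq> 2*dh+db \<Longrightarrow> j - (2*dh+db) = 1" using j by linarith
  ultimately show ?thesis by auto
qed
lemma key_idx: "j < 2*dh+db+2 \<Longrightarrow> key_out dh db i $ j =
  (if j < 2*dh+db then 0 else if j = 2*dh+db then -1 else of_nat i)"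
proof -
  assume j: "j < 2*dh+db+2"
  have "key_out dh db i $ j = (if j < 2*dh+db then 0 else [-1, of_nat i] ! (j - (2*dh+db)))"
    using j by (auto simp del: vec_of_list_Cons simp: key_out_def zvec_def vec_of_list_index
      intro!: arg_cong[where f="\<lambda>k. [- 1, rat_of_nat i] ! k"])
  moreover have "\<not> j < 2*dh+db \<Longrightarrow> j \<noteq> 2*dh+db \<Longrightarrow> j - (2*dh+db) = 1" using j by linarith
  ultimately show ?thesis by auto
qed
lemma l00: "k < 2 \<Longrightarrow> [0::rat, 0] ! k = 0"
  by (cases k) (auto simp: nth_Cons')
lemma val_idx: "s \<in> carrier_vec db \<Longrightarrow> j < 2*dh+db+2 \<Longrightarrow> val_out dh s $ j =
  (if j < dh then 0 else if j < dh+db then s$(j-dh) else 0)"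
  unfolding val_out_def zvec_def
  by (auto simp del: vec_of_list_Cons simp: vec_of_list_index l00)
lemma layer_id:
  assumes "\<forall>x\<in>set xs. x \<in> carrier_vec d"
  shows "enc_layer d (0\<^sub>m d d) (0\<^sub>m d d) (0\<^sub>m d d)
     (ffn (0\<^sub>m 0 d) (0\<^sub>v 0) (0\<^sub>m d 0) (0\<^sub>v d)) xs = xs"
proof -
  have att0: "att d q ks (map (\<lambda>y. 0\<^sub>m d d *\<^sub>v y) xs) = 0\<^sub>v d" for q ks
    unfolding att_def Let_def
    by (rule eq_vecI) (use assms in auto)
  have f0: "ffn (0\<^sub>m 0 d) (0\<^sub>v 0) (0\<^sub>m d 0) (0\<^sub>v d) a = 0\<^sub>v d" for a
    unfolding ffn_def by (rule eq_vecI) (auto simp: scalar_prod_def)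
  show ?thesis unfolding enc_layer_def Let_def att0 f0
    using assms by (auto intro!: map_idI)
qed

lemma mv_idx: "A \<in> carrier_mat d d \<Longrightarrow> x \<in> carrier_vec d \<Longrightarrow> j < d \<Longrightarrow>
  (A *\<^sub>v x) $ j = (\<Sum>k<d. A $$ (j,k) * x $ k)"
  by (auto simp: scalar_prod_def lessThan_atLeast0 row_def)


definition K1m :: "nat \<Rightarrow> nat \<Rightarrow> rat mat" where
  "K1m dh db = mat (2*dh+db+2) (2*dh+db+2) (\<lambda>(i,j). if i = 2*dh+db \<and> j = 2*dh+db+1 then -1
      else if i = 2*dh+db+1 \<and> j = 2*dh+db then 1 else 0)"
definition V1m :: "nat \<Rightarrow> nat \<Rightarrow> rat mat" where
  "V1m dh db = mat (2*dh+db+2) (2*dh+db+2) (\<lambda>(i,j). if i = j \<and> dh \<le> i \<and> i < dh+db then 1 else 0)"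

lemma K1x: assumes s: "s \<in> carrier_vec db" shows "K1m dh db *\<^sub>v inp dh s i = key_out dh db i"
proof (rule eq_vecI)
  define d where "d = 2*dh+db+2"
  define A where "A = 2*dh+db"
  have dA: "d = A + 2" by (simp add: d_def A_def)
  have K1ent: "K1m dh db $$ (j,k) = (if j = A \<and> k = A+1 then -1 else if j = A+1 \<and> k = A then 1 else 0)"
    if "j < d" "k < d" for j k
    using that unfolding K1m_def A_def d_def by simp
  show "dim_vec (K1m dh db *\<^sub>v inp dh s i) = dim_vec (key_out dh db i)"
    by (simp add: K1m_def key_out_def zvec_def)
  fix j assume "j < dim_vec (key_out dh db i)"
  hence j: "j < d" by (simp add: key_out_def zvec_def d_def)
  have i1: "inp dh s i $ A = of_nat i" "inp dh s i $ (A+1) = 1"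
    using s inp_idx[of s db A dh i] inp_idx[of s db "A+1" dh i] by (simp_all add: A_def)
  have Kc: "K1m dh db \<in> carrier_mat d d" by (simp add: K1m_def d_def)
  have xc: "inp dh s i \<in> carrier_vec d" using inp_dim[OF s] by (simp add: d_def)
  have "(K1m dh db *\<^sub>v inp dh s i) $ j = (\<Sum>k<d. K1m dh db $$ (j,k) * inp dh s i $ k)"
    by (rule mv_idx[OF Kc xc j])
  also have "\<dots> = (\<Sum>k<d. (if j = A \<and> k = A+1 then -1
      else if j = A+1 \<and> k = A then of_nat i else 0))"
  proof (rule sum.cong[OF refl])
    fix k assume "k \<in> {..<d}"
    hence k: "k < d" by simp
    show "K1m dh db $$ (j,k) * inp dh s i $ k = (if j = A \<and> k = A+1 then -1
      else if j = A+1 \<and> k = A then of_nat i else 0)"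
      unfolding K1ent[OF j k] using i1 by auto
  qed
  also have "\<dots> = (if j = A then -1 else if j = A + 1 then of_nat i else 0)"
  proof (cases "j = A")
    case True
    hence "(\<Sum>k<d. (if j = A \<and> k = A+1 then -1
      else if j = A+1 \<and> k = A then of_nat i else 0)) = (\<Sum>k<d. (if k = A+1 then -1 else 0::rat))"
      by (intro sum.cong) auto
    also have "\<dots> = -1" by (simp add: dA)
    finally show ?thesis using True by simp
  next
    case False
    show ?thesis
    proof (cases "j = A+1")
      case True
      hence "(\<Sum>k<d. (if j = A \<and> k = A+1 then -1
        else if j = A+1 \<and> k = A then of_nat i else 0)) = (\<Sum>k<d. (if k = A then of_nat i else 0::rat))"
        by (intro sum.cong) auto
      also have "\<dots> = of_nat i" by (simp add: dA)
      finally show ?thesis using True by simp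
    next
      case F2: False
      show ?thesis using False F2 by simp
    qed
  qed
  also have "\<dots> = key_out dh db i $ j"
    using j key_idx[of j dh db i] by (simp add: A_def d_def)
  finally show "(K1m dh db *\<^sub>v inp dh s i) $ j = key_out dh db i $ j" .
qed

lemma V1x: assumes s: "s \<in> carrier_vec db" shows "V1m dh db *\<^sub>v inp dh s i = val_out dh s"
proof (rule eq_vecI)
  define d where "d = 2*dh+db+2"
  show "dim_vec (V1m dh db *\<^sub>v inp dh s i) = dim_vec (val_out dh s)"
    using s by (simp add: V1m_def val_out_def zvec_def)
  fix j assume "j < dim_vec (val_out dh s)"
  hence j: "j < d" using s by (simp add: val_out_def zvec_def d_def)
  have "(V1m dh db *\<^sub>v inp dh s i) $ j = (\<Sum>k<d. V1m dh db $$ (j,k) * inp dh s i $ k)"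
    by (rule mv_idx) (use j inp_dim[OF s] in \<open>auto simp: V1m_def d_def\<close>)
  also have "\<dots> = (\<Sum>k<d. (if k = j then (if dh \<le> j \<and> j < dh+db then s $ (j - dh) else 0) else 0))"
  proof (rule sum.cong[OF refl])
    fix k assume k: "k \<in> {..<d}"
    show "V1m dh db $$ (j,k) * inp dh s i $ k = (if k = j then (if dh \<le> j \<and> j < dh+db then s $ (j - dh) else 0) else 0)"
    proof (cases "k = j \<and> dh \<le> j \<and> j < dh+db")
      case True then show ?thesis using j s by (simp add: V1m_def inp_idx d_def)
    next
      case False then show ?thesis using j k by (auto simp: V1m_def d_def)
    qed
  qed
  also have "\<dots> = (if dh \<le> j \<and> j < dh+db then s $ (j - dh) else 0)"
    using j by simp
  also have "\<dots> = val_out dh s $ j"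
    using j s val_idx[of s db j dh] by (simp add: d_def)
  finally show "(V1m dh db *\<^sub>v inp dh s i) $ j = val_out dh s $ j" .
qed

theorem lemma1:
  fixes dh db :: nat
  assumes "dh \<ge> 1" and "db \<ge> 1"
  defines "d \<equiv> 2 * dh + db + 2"
  shows "\<exists>Q K V K1 V1 (m::nat) W1 b1 W2 b2.
           Q \<in> carrier_mat d d \<and> K \<in> carrier_mat d d \<and> V \<in> carrier_mat d d \<and>
           K1 \<in> carrier_mat d d \<and> V1 \<in> carrier_mat d d \<and>
           W1 \<in> carrier_mat m d \<and> b1 \<in> carrier_vec m \<and>
           W2 \<in> carrier_mat d m \<and> b2 \<in> carrier_vec d \<and>
           (\<forall>n::nat. n \<ge> 1 \<longrightarrow> (\<forall>s :: nat \<Rightarrow> rat vec.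
              (\<forall>i \<in> {1..n}. s i \<in> carrier_vec db) \<longrightarrow>
              (let Z = enc_layer d Q K V (ffn W1 b1 W2 b2) (map (\<lambda>i. inp dh (s i) i) [1..<n+1])
               in map (\<lambda>z. K1 *\<^sub>v z) Z = map (\<lambda>i. key_out dh db i) [1..<n+1] \<and>
                  map (\<lambda>z. V1 *\<^sub>v z) Z = map (\<lambda>i. val_out dh (s i)) [1..<n+1])))"
proof -
  have c1: "K1m dh db \<in> carrier_mat d d" "V1m dh db \<in> carrier_mat d d"
    by (simp_all add: K1m_def V1m_def d_def)
  have main: "let Z = enc_layer d (0\<^sub>m d d) (0\<^sub>m d d) (0\<^sub>m d d) (ffn (0\<^sub>m 0 d) (0\<^sub>v 0) (0\<^sub>m d 0) (0\<^sub>v d))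
        (map (\<lambda>i. inp dh (s i) i) [1..<n+1])
      in map (\<lambda>z. K1m dh db *\<^sub>v z) Z = map (\<lambda>i. key_out dh db i) [1..<n+1] \<and>
         map (\<lambda>z. V1m dh db *\<^sub>v z) Z = map (\<lambda>i. val_out dh (s i)) [1..<n+1]"
    if "\<forall>i\<in>{1..n}. s i \<in> carrier_vec db" for n and s :: "nat \<Rightarrow> rat vec"
  proof -
    have sc: "\<And>i. i \<in> set [1..<n+1] \<Longrightarrow> s i \<in> carrier_vec db" using that by auto
    have Z: "enc_layer d (0\<^sub>m d d) (0\<^sub>m d d) (0\<^sub>m d d) (ffn (0\<^sub>m 0 d) (0\<^sub>v 0) (0\<^sub>m d 0) (0\<^sub>v d))
        (map (\<lambda>i. inp dh (s i) i) [1..<n+1]) = map (\<lambda>i. inp dh (s i) i) [1..<n+1]"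
    proof (rule layer_id, rule ballI)
      fix x assume "x \<in> set (map (\<lambda>i. inp dh (s i) i) [1..<n+1])"
      then obtain i where i: "i \<in> set [1..<n+1]" and x: "x = inp dh (s i) i" by auto
      show "x \<in> carrier_vec d" unfolding x d_def by (rule inp_dim[OF sc[OF i]])
    qed
    have e1: "map (\<lambda>z. K1m dh db *\<^sub>v z) (map (\<lambda>i. inp dh (s i) i) [1..<n+1]) = map (\<lambda>i. key_out dh db i) [1..<n+1]"
      unfolding map_map by (rule map_cong[OF refl]) (simp add: K1x sc)
    have e2: "map (\<lambda>z. V1m dh db *\<^sub>v z) (map (\<lambda>i. inp dh (s i) i) [1..<n+1]) = map (\<lambda>i. val_out dh (s i)) [1..<n+1]"
      unfolding map_map by (rule map_cong[OF refl]) (simp add: V1x sc)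
    show ?thesis unfolding Let_def Z using e1 e2 by blast
  qed
  show ?thesis
    apply (rule exI[of _ "0\<^sub>m d d"], rule exI[of _ "0\<^sub>m d d"], rule exI[of _ "0\<^sub>m d d"],
      rule exI[of _ "K1m dh db"], rule exI[of _ "V1m dh db"], rule exI[of _ 0], rule exI[of _ "0\<^sub>m 0 d"],
      rule exI[of _ "0\<^sub>v 0"], rule exI[of _ "0\<^sub>m d 0"], rule exI[of _ "0\<^sub>v d"])
    by (intro conjI allI impI c1 main zero_carrier_mat zero_carrier_vec) auto
qed

end
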